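(* Let $\mathcal X$ be finite, $\hat P_0,\hat P_1$ distributions on $\mathcal X$ with full support, and for $\hat\gamma$ with $-D(\hat P_0\|\hat P_1)\le\hat\gamma\le D(\hat P_1\|\hat P_0)$ let $\hat Q_\lambda(x)=\hat P_0^{1-\lambda}(x)\hat P_1^{\lambda}(x)/\sum_a\hat P_0^{1-\lambda}(a)\hat P_1^{\lambda}(a)$ with $\lambda\in[0,1]$ solving $D(\hat Q_\lambda\|\hat P_0)-D(\hat Q_\lambda\|\hat P_1)=\hat\gamma$. Define, for $i\in\{0,1\}$ and a constant $\alpha>0$, $$\theta_i(\hat P_0,\hat P_1,\hat\gamma)=\frac2\alpha\mathrm{Var}_{\hat P_i}\Big(\frac{\hat Q_\lambda(X)}{\hat P_i(X)}\Big).$$ Then for every such $\hat\gamma$, $$\frac{\partial}{\partial\hat\gamma}\theta_0(\hat P_0,\hat P_1,\hat\gamma)\ge0,\qquad \frac{\partial}{\partial\hat\gamma}\theta_1(\hat P_0,\hat P_1,\hat\gamma)\le0.$$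
   Context: $D$ denotes relative entropy. $\theta_i$ is the sensitivity of the worst-case error exponent of the mismatched likelihood ratio test (with test distributions $\hat P_0,\hat P_1$ and threshold $\hat\gamma$) to a divergence-ball mismatch of order/curvature $\alpha$. *)

theory Defs
  imports "HOL-Analysis.Analysis"
begin

definition full_support_dist :: "('a::finite \<Rightarrow> real) \<Rightarrow> bool" where
  "full_support_dist P \<longleftrightarrow> (\<forall>x. P x > 0) \<and> (\<Sum>x\<in>UNIV. P x) = 1"

definition KL :: "('a::finite \<Rightarrow> real) \<Rightarrow> ('a \<Rightarrow> real) \<Rightarrow> real" where
  "KL P Q = (\<Sum>x\<in>UNIV. P x * ln (P x / Q x))"

definition tilted :: "('a::finite \<Rightarrow> real) \<Rightarrow> ('a \<Rightarrow> real) \<Rightarrow> real \<Rightarrow> 'a \<Rightarrow> real" where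
  "tilted P0 P1 l x =
     P0 x powr (1 - l) * P1 x powr l / (\<Sum>a\<in>UNIV. P0 a powr (1 - l) * P1 a powr l)"

definition tilt_param :: "('a::finite \<Rightarrow> real) \<Rightarrow> ('a \<Rightarrow> real) \<Rightarrow> real \<Rightarrow> real" where
  "tilt_param P0 P1 g =
     (THE l. l \<in> {0..1} \<and> KL (tilted P0 P1 l) P0 - KL (tilted P0 P1 l) P1 = g)"

definition variance_under :: "('a::finite \<Rightarrow> real) \<Rightarrow> ('a \<Rightarrow> real) \<Rightarrow> real" where
  "variance_under P f = (\<Sum>x\<in>UNIV. P x * (f x - (\<Sum>y\<in>UNIV. P y * f y))\<^sup>2)"

definition theta :: "real \<Rightarrow> nat \<Rightarrow> ('a::finite \<Rightarrow> real) \<Rightarrow> ('a \<Rightarrow> real) \<Rightarrow> real \<Rightarrow> real" where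
  "theta alpha i P0 P1 g =
     (let Pi = (if i = 0 then P0 else P1)
      in 2 / alpha * variance_under Pi (\<lambda>x. tilted P0 P1 (tilt_param P0 P1 g) x / Pi x))"

end

theory Submission imports Defs "HOL-Complex_Analysis.Complex_Analysis" begin

lemma bot0: "at (x::real) within {x} = bot"
  by (simp add: at_within_def)

definition LL :: "('a::finite \<Rightarrow> real) \<Rightarrow> ('a \<Rightarrow> real) \<Rightarrow> 'a \<Rightarrow> real" where
  "LL P0 P1 x = ln (P1 x / P0 x)"
definition ZZ :: "('a::finite \<Rightarrow> real) \<Rightarrow> ('a \<Rightarrow> real) \<Rightarrow> real \<Rightarrow> real" where
  "ZZ P0 P1 t = (\<Sum>x\<in>UNIV. P0 x * exp (t * LL P0 P1 x))"
definition AA :: "('a::finite \<Rightarrow> real) \<Rightarrow> ('a \<Rightarrow> real) \<Rightarrow> real \<Rightarrow> real" where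
  "AA P0 P1 t = (\<Sum>x\<in>UNIV. P0 x * exp (t * LL P0 P1 x) * LL P0 P1 x)"
definition BB :: "('a::finite \<Rightarrow> real) \<Rightarrow> ('a \<Rightarrow> real) \<Rightarrow> real \<Rightarrow> real" where
  "BB P0 P1 t = (\<Sum>x\<in>UNIV. P0 x * exp (t * LL P0 P1 x) * (LL P0 P1 x)^2)"
definition FF :: "('a::finite \<Rightarrow> real) \<Rightarrow> ('a \<Rightarrow> real) \<Rightarrow> real \<Rightarrow> real" where
  "FF P0 P1 t = AA P0 P1 t / ZZ P0 P1 t"

context
  fixes P0 P1 :: "'a::finite \<Rightarrow> real"
  assumes d0: "full_support_dist P0" and d1: "full_support_dist P1"
begin

lemma pos0: "P0 x > 0" using d0 by (auto simp: full_support_dist_def)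
lemma pos1: "P1 x > 0" using d1 by (auto simp: full_support_dist_def)
lemma sum0: "(\<Sum>x\<in>UNIV. P0 x) = 1" using d0 by (auto simp: full_support_dist_def)
lemma sum1: "(\<Sum>x\<in>UNIV. P1 x) = 1" using d1 by (auto simp: full_support_dist_def)

lemma expL: "exp (LL P0 P1 x) = P1 x / P0 x"
  using pos0[of x] pos1[of x] by (simp add: LL_def)

lemma ZZ_pos: "ZZ P0 P1 t > 0"
  unfolding ZZ_def by (rule sum_pos) (auto intro: pos0 mult_pos_pos)

lemma powr_eq: "P0 x powr (1 - l) * P1 x powr l = P0 x * exp (l * LL P0 P1 x)"
proof -
  have a: "P0 x > 0" "P1 x > 0" by (rule pos0, rule pos1)
  have "P0 x powr (1 - l) * P1 x powr l = exp ((1-l) * ln (P0 x) + l * ln (P1 x))"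
    using a by (simp add: powr_def exp_add)
  also have "\<dots> = exp (ln (P0 x) + l * LL P0 P1 x)"
    using a by (simp add: LL_def ln_div algebra_simps)
  also have "\<dots> = P0 x * exp (l * LL P0 P1 x)"
    using a by (simp add: exp_add)
  finally show ?thesis .
qed

lemma tilted_eq: "tilted P0 P1 l x = P0 x * exp (l * LL P0 P1 x) / ZZ P0 P1 l"
  unfolding tilted_def ZZ_def by (simp add: powr_eq)

lemma tilted_pos: "tilted P0 P1 l x > 0"
  using ZZ_pos pos0 by (simp add: tilted_eq)

lemma tilted_sum: "(\<Sum>x\<in>UNIV. tilted P0 P1 l x) = 1"
  using ZZ_pos[of l] by (simp add: tilted_eq sum_divide_distrib[symmetric] ZZ_def[symmetric])

lemma KL_diff: "KL (tilted P0 P1 l) P0 - KL (tilted P0 P1 l) P1 = FF P0 P1 l"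
proof -
  have "KL (tilted P0 P1 l) P0 - KL (tilted P0 P1 l) P1
      = (\<Sum>x\<in>UNIV. tilted P0 P1 l x * LL P0 P1 x)"
    unfolding KL_def sum_subtractf[symmetric]
  proof (rule sum.cong[OF refl])
    fix x
    have a: "P0 x > 0" "P1 x > 0" "tilted P0 P1 l x > 0" by (rule pos0, rule pos1, rule tilted_pos)
    then show "tilted P0 P1 l x * ln (tilted P0 P1 l x / P0 x) -
          tilted P0 P1 l x * ln (tilted P0 P1 l x / P1 x) = tilted P0 P1 l x * LL P0 P1 x"
      by (simp add: LL_def ln_div algebra_simps)
  qed
  also have "\<dots> = FF P0 P1 l"
    by (simp add: FF_def AA_def tilted_eq sum_divide_distrib[symmetric])
  finally show ?thesis .
qed

lemma ZZ_deriv: "(ZZ P0 P1 has_real_derivative AA P0 P1 t) (at t)"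
  unfolding ZZ_def AA_def
  by (rule DERIV_sum) (auto intro!: derivative_eq_intros)

lemma AA_deriv: "(AA P0 P1 has_real_derivative BB P0 P1 t) (at t)"
  unfolding BB_def AA_def
  by (rule DERIV_sum) (auto intro!: derivative_eq_intros simp: power2_eq_square)

lemma FF_deriv: "(FF P0 P1 has_real_derivative
   (BB P0 P1 t * ZZ P0 P1 t - (AA P0 P1 t)^2) / (ZZ P0 P1 t)^2) (at t)"
proof -
  have "((\<lambda>t. AA P0 P1 t / ZZ P0 P1 t) has_real_derivative
   (BB P0 P1 t * ZZ P0 P1 t - AA P0 P1 t * AA P0 P1 t) / (ZZ P0 P1 t * ZZ P0 P1 t)) (at t)"
    by (rule DERIV_divide[OF AA_deriv ZZ_deriv]) (use ZZ_pos[of t] in simp)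
  then show ?thesis unfolding FF_def[abs_def] by (simp add: power2_eq_square)
qed

lemma aux_sum: "finite A \<Longrightarrow> (\<Sum>x\<in>A. a x * (W::real) + w x * Bs - 2 * c x * C) = sum a A * W + sum w A * Bs - 2 * sum c A * C"
  by (simp add: sum.distrib sum_subtractf sum_distrib_right sum_distrib_left mult.assoc)

lemma double_sum_id:
  "(\<Sum>x\<in>UNIV. \<Sum>y\<in>UNIV. P0 x * exp (t * LL P0 P1 x) * (P0 y * exp (t * LL P0 P1 y)) * (LL P0 P1 x - LL P0 P1 y)^2)
   = 2 * (BB P0 P1 t * ZZ P0 P1 t - (AA P0 P1 t)^2)"
proof -
  define w where "w x = P0 x * exp (t * LL P0 P1 x)" for x
  define L where "L x = LL P0 P1 x" for x
  have "(\<Sum>x\<in>UNIV. \<Sum>y\<in>UNIV. w x * w y * (L x - L y)^2)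
     = (\<Sum>x\<in>UNIV. \<Sum>y\<in>UNIV. (w x * L x ^2) * w y + w x * (w y * L y ^2) - 2 * (w x * L x) * (w y * L y))"
    by (rule sum.cong[OF refl], rule sum.cong[OF refl]) (simp add: power2_eq_square algebra_simps)
  also have "\<dots> = (\<Sum>x\<in>UNIV. (w x * L x ^2) * (\<Sum>y\<in>UNIV. w y) + w x * (\<Sum>y\<in>UNIV. w y * L y ^2) - 2 * (w x * L x) * (\<Sum>y\<in>UNIV. w y * L y))"
    by (rule sum.cong[OF refl]) (simp add: sum.distrib sum_subtractf sum_distrib_left)
  also have "\<dots> = 2 * ((\<Sum>x\<in>UNIV. w x * L x ^2) * (\<Sum>x\<in>UNIV. w x) - (\<Sum>x\<in>UNIV. w x * L x)^2)"
    by (subst aux_sum) (simp_all add: power2_eq_square right_diff_distrib mult.commute)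
  finally show ?thesis by (simp add: w_def L_def BB_def ZZ_def AA_def)
qed

lemma var_pos:
  assumes ne: "P0 \<noteq> P1"
  shows "BB P0 P1 t * ZZ P0 P1 t - (AA P0 P1 t)^2 > 0"
proof -
  have "\<exists>x y. LL P0 P1 x \<noteq> LL P0 P1 y"
  proof (rule ccontr)
    assume "\<not> ?thesis"
    then have c: "\<And>x y. LL P0 P1 x = LL P0 P1 y" by blast
    obtain z :: 'a where True by simp
    have e: "P1 x = P0 x * exp (LL P0 P1 z)" for x
      using expL[of x] c[of x z] pos0[of x] by simp
    have "1 = (\<Sum>x\<in>UNIV. P0 x) * exp (LL P0 P1 z)"
      using sum1 by (simp add: e sum_distrib_right)
    then have "exp (LL P0 P1 z) = 1" using sum0 by simp
    then have "P1 = P0" using e by (auto simp: fun_eq_iff)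
    with ne show False by simp
  qed
  then obtain x0 y0 where xy: "LL P0 P1 x0 \<noteq> LL P0 P1 y0" by blast
  define g where "g x y = P0 x * exp (t * LL P0 P1 x) * (P0 y * exp (t * LL P0 P1 y)) * (LL P0 P1 x - LL P0 P1 y)^2" for x y
  have gnn: "g x y \<ge> 0" for x y unfolding g_def using pos0[of x] pos0[of y] by simp
  have "0 < g x0 y0" unfolding g_def using pos0[of x0] pos0[of y0] xy by simp
  also have "\<dots> \<le> (\<Sum>y\<in>UNIV. g x0 y)" by (rule member_le_sum) (auto intro: gnn)
  also have "\<dots> \<le> (\<Sum>x\<in>UNIV. \<Sum>y\<in>UNIV. g x y)" by (rule member_le_sum) (auto intro!: sum_nonneg gnn)
  also have "\<dots> = 2 * (BB P0 P1 t * ZZ P0 P1 t - (AA P0 P1 t)^2)" unfolding g_def by (rule double_sum_id)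
  finally show ?thesis by simp
qed

lemma FF_strict:
  assumes ne: "P0 \<noteq> P1" and "a < b"
  shows "FF P0 P1 a < FF P0 P1 b"
  using assms(2)
proof (rule DERIV_pos_imp_increasing)
  fix x show "\<exists>y. (FF P0 P1 has_real_derivative y) (at x) \<and> 0 < y"
    using FF_deriv[of x] var_pos[OF ne, of x] ZZ_pos[of x] by auto
qed

lemma FF_cont: "continuous_on S (FF P0 P1)"
  by (rule continuous_at_imp_continuous_on) (use FF_deriv DERIV_isCont in blast)

lemma ZZ0: "ZZ P0 P1 0 = 1" using sum0 by (simp add: ZZ_def)
lemma ZZ1: "ZZ P0 P1 1 = 1"
proof -
  have "ZZ P0 P1 1 = (\<Sum>x\<in>UNIV. P1 x)" unfolding ZZ_def
    apply (rule sum.cong[OF refl]) subgoal for x using pos0[of x] by (simp add: expL) done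
  then show ?thesis using sum1 by simp
qed

lemma FF0: "FF P0 P1 0 = - KL P0 P1"
proof -
  have "AA P0 P1 0 = - KL P0 P1" unfolding AA_def KL_def sum_negf[symmetric]
    apply (rule sum.cong[OF refl]) subgoal for x using pos0[of x] pos1[of x]
      by (simp add: LL_def ln_div algebra_simps) done
  then show ?thesis by (simp add: FF_def ZZ0)
qed

lemma FF1: "FF P0 P1 1 = KL P1 P0"
proof -
  have "AA P0 P1 1 = KL P1 P0" unfolding AA_def KL_def
    apply (rule sum.cong[OF refl]) subgoal for x using pos0[of x] pos1[of x]
      by (simp add: expL LL_def) done
  then show ?thesis by (simp add: FF_def ZZ1)
qed

lemma var0: "variance_under P0 (\<lambda>x. tilted P0 P1 l x / P0 x)
   = ZZ P0 P1 (2*l) / (ZZ P0 P1 l)^2 - 1"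
proof -
  have m: "(\<Sum>y\<in>UNIV. P0 y * (tilted P0 P1 l y / P0 y)) = 1"
    using pos0 tilted_sum by (simp add: less_imp_neq[symmetric])
  have "variance_under P0 (\<lambda>x. tilted P0 P1 l x / P0 x)
     = (\<Sum>x\<in>UNIV. P0 x * exp ((2*l) * LL P0 P1 x) / (ZZ P0 P1 l)^2 - 2 * tilted P0 P1 l x + P0 x)"
    unfolding variance_under_def m
  proof (rule sum.cong[OF refl])
    fix x
    have a: "P0 x > 0" "ZZ P0 P1 l > 0" by (rule pos0, rule ZZ_pos)
    have e: "exp ((2*l) * LL P0 P1 x) = exp (l * LL P0 P1 x)^2"
      by (simp add: exp_double[symmetric] power2_eq_square exp_add[symmetric])
    show "P0 x * (tilted P0 P1 l x / P0 x - 1)\<^sup>2 =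
         P0 x * exp (2 * l * LL P0 P1 x) / (ZZ P0 P1 l)\<^sup>2 - 2 * tilted P0 P1 l x + P0 x"
      using a unfolding e tilted_eq by (simp add: field_simps power2_eq_square)
  qed
  also have "\<dots> = ZZ P0 P1 (2*l) / (ZZ P0 P1 l)^2 - 1"
    by (simp add: sum.distrib sum_subtractf sum_divide_distrib[symmetric] sum_distrib_left[symmetric]
        ZZ_def[symmetric] tilted_sum sum0)
  finally show ?thesis .
qed

lemma var1: "variance_under P1 (\<lambda>x. tilted P0 P1 l x / P1 x)
   = ZZ P0 P1 (2*l - 1) / (ZZ P0 P1 l)^2 - 1"
proof -
  have m: "(\<Sum>y\<in>UNIV. P1 y * (tilted P0 P1 l y / P1 y)) = 1"
    using pos1 tilted_sum by (simp add: less_imp_neq[symmetric])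
  have "variance_under P1 (\<lambda>x. tilted P0 P1 l x / P1 x)
     = (\<Sum>x\<in>UNIV. P0 x * exp ((2*l - 1) * LL P0 P1 x) / (ZZ P0 P1 l)^2 - 2 * tilted P0 P1 l x + P1 x)"
    unfolding variance_under_def m
  proof (rule sum.cong[OF refl])
    fix x
    have a: "P0 x > 0" "P1 x > 0" "ZZ P0 P1 l > 0" by (rule pos0, rule pos1, rule ZZ_pos)
    have e: "exp ((2*l - 1) * LL P0 P1 x) = exp (l * LL P0 P1 x)^2 * P0 x / P1 x"
      using a by (simp add: power2_eq_square exp_add[symmetric] exp_diff expL algebra_simps)
    show "P1 x * (tilted P0 P1 l x / P1 x - 1)\<^sup>2 =
         P0 x * exp ((2 * l - 1) * LL P0 P1 x) / (ZZ P0 P1 l)\<^sup>2 - 2 * tilted P0 P1 l x + P1 x"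
      using a unfolding e tilted_eq by (simp add: field_simps power2_eq_square)
  qed
  also have "\<dots> = ZZ P0 P1 (2*l - 1) / (ZZ P0 P1 l)^2 - 1"
    by (simp add: sum.distrib sum_subtractf sum_divide_distrib[symmetric] sum_distrib_left[symmetric]
        ZZ_def[symmetric] tilted_sum sum1)
  finally show ?thesis .
qed

lemma FF_mono: assumes ne: "P0 \<noteq> P1" and "a \<le> b" shows "FF P0 P1 a \<le> FF P0 P1 b"
  using FF_strict[OF ne, of a b] assms(2) by (cases "a = b") auto

lemma FF_inj: assumes ne: "P0 \<noteq> P1" shows "inj (FF P0 P1)"
proof (rule injI)
  fix a b assume "FF P0 P1 a = FF P0 P1 b"
  then show "a = b" using FF_strict[OF ne, of a b] FF_strict[OF ne, of b a]
    by (cases a b rule: linorder_cases) auto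
qed

lemma K0_deriv:
  assumes ne: "P0 \<noteq> P1" and al: "alpha > 0" and l: "0 \<le> l"
  shows "\<exists>D. ((\<lambda>l. 2 / alpha * (ZZ P0 P1 (2*l) / (ZZ P0 P1 l * ZZ P0 P1 l) - 1)) has_real_derivative D) (at l) \<and> D \<ge> 0"
proof -
  let ?Z = "ZZ P0 P1" and ?A = "AA P0 P1"
  have z2: "((\<lambda>l. ?Z (2*l)) has_real_derivative ?A (2*l) * 2) (at l)"
    by (rule DERIV_chain2[OF ZZ_deriv]) (auto intro!: derivative_eq_intros)
  have zz: "((\<lambda>l. ?Z l * ?Z l) has_real_derivative ?A l * ?Z l + ?A l * ?Z l) (at l)"
    by (rule DERIV_mult[OF ZZ_deriv ZZ_deriv])
  have q: "((\<lambda>l. ?Z (2*l) / (?Z l * ?Z l)) has_real_derivative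
      (?A (2*l) * 2 * (?Z l * ?Z l) - ?Z (2*l) * (?A l * ?Z l + ?A l * ?Z l)) / ((?Z l * ?Z l) * (?Z l * ?Z l))) (at l)"
    by (rule DERIV_divide[OF z2 zz]) (use ZZ_pos[of l] in simp)
  have k: "((\<lambda>l. 2 / alpha * (?Z (2*l) / (?Z l * ?Z l) - 1)) has_real_derivative
      2 / alpha * ((?A (2*l) * 2 * (?Z l * ?Z l) - ?Z (2*l) * (?A l * ?Z l + ?A l * ?Z l)) / ((?Z l * ?Z l) * (?Z l * ?Z l)) - 0)) (at l)"
    by (intro DERIV_cmult DERIV_diff q DERIV_const)
  have p: "?Z l > 0" "?Z (2*l) > 0" by (rule ZZ_pos)+
  have m: "FF P0 P1 l \<le> FF P0 P1 (2*l)" using FF_mono[OF ne] l by simp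
  have e: "?A (2*l) * ?Z l - ?Z (2*l) * ?A l = ?Z (2*l) * ?Z l * (FF P0 P1 (2*l) - FF P0 P1 l)"
    using p by (simp add: FF_def field_simps)
  have "?A (2*l) * ?Z l - ?Z (2*l) * ?A l \<ge> 0" unfolding e using p m by simp
  then have "?A (2*l) * 2 * (?Z l * ?Z l) - ?Z (2*l) * (?A l * ?Z l + ?A l * ?Z l) \<ge> 0"
  proof -
    assume h: "?A (2*l) * ?Z l - ?Z (2*l) * ?A l \<ge> 0"
    have "?A (2*l) * 2 * (?Z l * ?Z l) - ?Z (2*l) * (?A l * ?Z l + ?A l * ?Z l)
        = 2 * ?Z l * (?A (2*l) * ?Z l - ?Z (2*l) * ?A l)" by (simp add: algebra_simps)
    then show ?thesis using h p by simp
  qed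
  then show ?thesis using k al p by (intro exI[of _ "2 / alpha * ((?A (2*l) * 2 * (?Z l * ?Z l) - ?Z (2*l) * (?A l * ?Z l + ?A l * ?Z l)) / ((?Z l * ?Z l) * (?Z l * ?Z l)) - 0)"]) simp
qed

lemma K1_deriv:
  assumes ne: "P0 \<noteq> P1" and al: "alpha > 0" and l: "l \<le> 1"
  shows "\<exists>D. ((\<lambda>l. 2 / alpha * (ZZ P0 P1 (2*l - 1) / (ZZ P0 P1 l * ZZ P0 P1 l) - 1)) has_real_derivative D) (at l) \<and> D \<le> 0"
proof -
  let ?Z = "ZZ P0 P1" and ?A = "AA P0 P1"
  have z2: "((\<lambda>l. ?Z (2*l - 1)) has_real_derivative ?A (2*l - 1) * 2) (at l)"
    by (rule DERIV_chain2[OF ZZ_deriv]) (auto intro!: derivative_eq_intros)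
  have zz: "((\<lambda>l. ?Z l * ?Z l) has_real_derivative ?A l * ?Z l + ?A l * ?Z l) (at l)"
    by (rule DERIV_mult[OF ZZ_deriv ZZ_deriv])
  have q: "((\<lambda>l. ?Z (2*l - 1) / (?Z l * ?Z l)) has_real_derivative
      (?A (2*l - 1) * 2 * (?Z l * ?Z l) - ?Z (2*l - 1) * (?A l * ?Z l + ?A l * ?Z l)) / ((?Z l * ?Z l) * (?Z l * ?Z l))) (at l)"
    by (rule DERIV_divide[OF z2 zz]) (use ZZ_pos[of l] in simp)
  have k: "((\<lambda>l. 2 / alpha * (?Z (2*l - 1) / (?Z l * ?Z l) - 1)) has_real_derivative
      2 / alpha * ((?A (2*l - 1) * 2 * (?Z l * ?Z l) - ?Z (2*l - 1) * (?A l * ?Z l + ?A l * ?Z l)) / ((?Z l * ?Z l) * (?Z l * ?Z l)) - 0)) (at l)"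
    by (intro DERIV_cmult DERIV_diff q DERIV_const)
  have p: "?Z l > 0" "?Z (2*l - 1) > 0" by (rule ZZ_pos)+
  have m: "FF P0 P1 (2*l - 1) \<le> FF P0 P1 l" using FF_mono[OF ne] l by simp
  have e: "?A (2*l - 1) * ?Z l - ?Z (2*l - 1) * ?A l = ?Z (2*l - 1) * ?Z l * (FF P0 P1 (2*l - 1) - FF P0 P1 l)"
    using p by (simp add: FF_def field_simps)
  have h: "?A (2*l - 1) * ?Z l - ?Z (2*l - 1) * ?A l \<le> 0" unfolding e using p m
    by (simp add: mult_nonneg_nonpos)
  have "?A (2*l - 1) * 2 * (?Z l * ?Z l) - ?Z (2*l - 1) * (?A l * ?Z l + ?A l * ?Z l)
        = 2 * ?Z l * (?A (2*l - 1) * ?Z l - ?Z (2*l - 1) * ?A l)" by (simp add: algebra_simps)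
  then have "?A (2*l - 1) * 2 * (?Z l * ?Z l) - ?Z (2*l - 1) * (?A l * ?Z l + ?A l * ?Z l) \<le> 0"
    using h p by (simp add: mult_nonneg_nonpos)
  then show ?thesis using k al p by (intro exI[of _ "2 / alpha * ((?A (2*l - 1) * 2 * (?Z l * ?Z l) - ?Z (2*l - 1) * (?A l * ?Z l + ?A l * ?Z l)) / ((?Z l * ?Z l) * (?Z l * ?Z l)) - 0)"])
      (simp add: divide_nonpos_pos mult_nonneg_nonpos)
qed

lemma tp_eq:
  assumes ne: "P0 \<noteq> P1" and g: "g \<in> {- KL P0 P1 .. KL P1 P0}"
  shows "tilt_param P0 P1 g = inv (FF P0 P1) g \<and> tilt_param P0 P1 g \<in> {0..1}"
proof -
  obtain l where l: "0 \<le> l" "l \<le> 1" "FF P0 P1 l = g"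
    using IVT'[of "FF P0 P1" 0 g 1] g FF0 FF1 FF_cont by auto
  have t: "tilt_param P0 P1 g = l" unfolding tilt_param_def KL_diff
    by (rule the_equality) (use l FF_inj[OF ne] in \<open>auto dest: injD\<close>)
  have "inv (FF P0 P1) g = l" using l(3) FF_inj[OF ne] by (metis inv_f_f)
  then show ?thesis using t l by simp
qed

end

theorem proposition1:
  fixes P0 P1 :: "'a::finite \<Rightarrow> real" and alpha gamma :: real
  assumes "full_support_dist P0" and "full_support_dist P1" and "alpha > 0"
    and "- KL P0 P1 \<le> gamma" and "gamma \<le> KL P1 P0"
  shows "(\<exists>D. ((\<lambda>g. theta alpha 0 P0 P1 g) has_real_derivative D)
                 (at gamma within {- KL P0 P1 .. KL P1 P0}) \<and> D \<ge> 0)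
       \<and> (\<exists>D. ((\<lambda>g. theta alpha 1 P0 P1 g) has_real_derivative D)
                 (at gamma within {- KL P0 P1 .. KL P1 P0}) \<and> D \<le> 0)"
proof (cases "P0 = P1")
  case True
  have nz: "P1 x \<noteq> 0" for x using pos1[OF assms(1,2), of x] by simp
  have "KL P0 P1 = 0" "KL P1 P0 = 0" using True nz by (simp_all add: KL_def)
  then have "at gamma within {- KL P0 P1 .. KL P1 P0} = bot" using assms(4,5) by (simp add: bot0)
  then show ?thesis by (auto simp: has_field_derivative_def intro!: has_derivative_bot bounded_linear_mult_right)
next
  case ne: False
  note d = assms(1,2)
  let ?S = "{- KL P0 P1 .. KL P1 P0}"
  let ?F = "FF P0 P1"
  have gS: "gamma \<in> ?S" using assms by simp
  obtain l0 where l0: "tilt_param P0 P1 gamma = l0" by simp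
  have tp0: "inv ?F gamma = l0" "l0 \<in> {0..1}" using tp_eq[OF d ne gS] l0 by auto
  have Fl0: "?F l0 = gamma"
  proof -
    obtain l where "0 \<le> l" "l \<le> 1" "?F l = gamma"
      using IVT'[of ?F 0 gamma 1] assms FF0[OF d] FF1[OF d] FF_cont[OF d] by auto
    then show ?thesis using tp0(1) FF_inj[OF d ne] by (metis inv_f_f)
  qed
  define Fd where "Fd = (BB P0 P1 l0 * ZZ P0 P1 l0 - (AA P0 P1 l0)^2) / (ZZ P0 P1 l0)^2"
  have Fdpos: "Fd > 0" unfolding Fd_def using var_pos[OF d ne, of l0] ZZ_pos[OF d, of l0] by simp
  have invd: "(inv ?F has_real_derivative inverse Fd) (at gamma)"
  proof -
    have "(inv ?F has_real_derivative inverse Fd) (at (?F l0))"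
      by (rule has_field_derivative_inverse_strong[where f="?F" and x=l0 and f'=Fd and S=UNIV and g="inv ?F"])
         (use FF_deriv[OF d, of l0] Fdpos FF_cont[OF d] FF_inj[OF d ne] in \<open>auto simp: Fd_def intro: inv_f_f\<close>)
    then show ?thesis using Fl0 by simp
  qed
  have th0: "theta alpha 0 P0 P1 g = 2 / alpha * (ZZ P0 P1 (2 * inv ?F g) / (ZZ P0 P1 (inv ?F g) * ZZ P0 P1 (inv ?F g)) - 1)"
    if "g \<in> ?S" for g
    using tp_eq[OF d ne that] by (simp add: theta_def var0[OF d] power2_eq_square)
  have th1: "theta alpha 1 P0 P1 g = 2 / alpha * (ZZ P0 P1 (2 * inv ?F g - 1) / (ZZ P0 P1 (inv ?F g) * ZZ P0 P1 (inv ?F g)) - 1)"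
    if "g \<in> ?S" for g
    using tp_eq[OF d ne that] by (simp add: theta_def var1[OF d] power2_eq_square)
  obtain D0 where D0: "((\<lambda>l. 2 / alpha * (ZZ P0 P1 (2*l) / (ZZ P0 P1 l * ZZ P0 P1 l) - 1)) has_real_derivative D0) (at l0)" "D0 \<ge> 0"
    using K0_deriv[OF d ne assms(3), of l0] tp0 by auto
  obtain D1 where D1: "((\<lambda>l. 2 / alpha * (ZZ P0 P1 (2*l - 1) / (ZZ P0 P1 l * ZZ P0 P1 l) - 1)) has_real_derivative D1) (at l0)" "D1 \<le> 0"
    using K1_deriv[OF d ne assms(3), of l0] tp0 by auto
  have c0: "((\<lambda>g. 2 / alpha * (ZZ P0 P1 (2 * inv ?F g) / (ZZ P0 P1 (inv ?F g) * ZZ P0 P1 (inv ?F g)) - 1))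
      has_real_derivative D0 * inverse Fd) (at gamma within ?S)"
    by (rule DERIV_chain2[where f = "\<lambda>l. 2 / alpha * (ZZ P0 P1 (2*l) / (ZZ P0 P1 l * ZZ P0 P1 l) - 1)"])
       (use D0 tp0 invd in \<open>auto intro: has_field_derivative_at_within\<close>)
  have c1: "((\<lambda>g. 2 / alpha * (ZZ P0 P1 (2 * inv ?F g - 1) / (ZZ P0 P1 (inv ?F g) * ZZ P0 P1 (inv ?F g)) - 1))
      has_real_derivative D1 * inverse Fd) (at gamma within ?S)"
    by (rule DERIV_chain2[where f = "\<lambda>l. 2 / alpha * (ZZ P0 P1 (2*l - 1) / (ZZ P0 P1 l * ZZ P0 P1 l) - 1)"])
       (use D1 tp0 invd in \<open>auto intro: has_field_derivative_at_within\<close>)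
  have r0: "((\<lambda>g. theta alpha 0 P0 P1 g) has_real_derivative D0 * inverse Fd) (at gamma within ?S)"
    by (rule has_field_derivative_transform_within[OF c0 zero_less_one gS]) (use th0 in auto)
  have r1: "((\<lambda>g. theta alpha 1 P0 P1 g) has_real_derivative D1 * inverse Fd) (at gamma within ?S)"
    by (rule has_field_derivative_transform_within[OF c1 zero_less_one gS]) (use th1 in auto)
  have "D0 * inverse Fd \<ge> 0" using D0(2) Fdpos by simp
  moreover have "D1 * inverse Fd \<le> 0" using D1(2) Fdpos by (simp add: mult_nonpos_nonneg)
  ultimately show ?thesis using r0 r1 by blast
qed

end
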